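(* $\dim_{\mathbb C}V_k\le|\mathbf B_k|$, where $|\mathbf B_k|=\frac14(u-1)(w+1)$ if $u$ is odd and $|\mathbf B_k|=\frac14uw-\frac12(v-1-u)$ if $u$ is even.
   Context: $u,v\in\mathbb Z_{\ge2}$ coprime with $u<2v$; $k=-2+u/v<0$, $w=2v-u$, $\mathbb L=2w\mathbb Z$. $\chi^{u,v}_{r,s}(q)=\eta(q)^{-1}\sum_{n\in\mathbb Z}(q^{(2uvn+vr-us)^2/4uv}-q^{(2uvn+vr+us)^2/4uv})$, $\eta$ Dedekind's eta; for $\mu\in\frac1v\mathbb Z$, $\theta'_{\mu+\mathbb L}(q)=-\frac1{2w}\sum_{\lambda\in\mu+\mathbb L}\lambda q^{-\lambda^2/4k}$; for $1\le r\le u-1$, $\mu\in r-1+2\mathbb Z$, $\Gamma^\mu_r=\sum_{s=1}^{v-1}(-1)^{s-1}\frac{\chi^{u,v}_{r,s}}{\eta}[\theta'_{\mu+sk+\mathbb L}-\theta'_{\mu-sk+\mathbb L}]$. $V_k$ is the span of all such $\Gamma^\mu_r$. $\mathbf B_k$ is the set of integer pairs $(\mu;r)$ with $\mu\equiv r-1\pmod2$ and: if $u$ odd, $0\le\mu\le w$, $1\le r\le\frac{u-1}2$; if $u$ even, either $0\le\mu\le w$, $1\le r\le\frac u2-1$, or $0\le\mu\le\frac w2$, $r=\frac u2$. *)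

theory Defs
  imports "HOL-Analysis.Analysis" "HOL-Library.Function_Algebras"
begin

text \<open>Fractional powers of the nome: q^x with q = exp(2 pi i tau), tau in the upper half plane.\<close>
definition qpow :: "complex \<Rightarrow> real \<Rightarrow> complex" where
  "qpow \<tau> x = exp (2 * of_real pi * \<i> * \<tau> * of_real x)"

definition eta :: "complex \<Rightarrow> complex" where
  "eta \<tau> = qpow \<tau> (1/24) * prodinf (\<lambda>n. 1 - qpow \<tau> (real (Suc n)))"

definition kk :: "nat \<Rightarrow> nat \<Rightarrow> real" where
  "kk u v = -2 + real u / real v"

definition ww :: "nat \<Rightarrow> nat \<Rightarrow> int" where
  "ww u v = 2 * int v - int u"

definition chi :: "nat \<Rightarrow> nat \<Rightarrow> int \<Rightarrow> int \<Rightarrow> complex \<Rightarrow> complex" where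
  "chi u v r s \<tau> =
     infsum (\<lambda>n::int.
        qpow \<tau> ((real_of_int (2* int u * int v * n + int v * r - int u * s))^2 / (4*real u*real v))
      - qpow \<tau> ((real_of_int (2* int u * int v * n + int v * r + int u * s))^2 / (4*real u*real v))) UNIV
     / eta \<tau>"

text \<open>theta'_{mu + L}, L = 2wZ, for real mu (used with mu in (1/v)Z).\<close>
definition theta' :: "nat \<Rightarrow> nat \<Rightarrow> real \<Rightarrow> complex \<Rightarrow> complex" where
  "theta' u v \<mu> \<tau> =
     - (1 / (2 * of_int (ww u v))) *
       infsum (\<lambda>n::int. of_real (\<mu> + 2 * real_of_int (ww u v) * real_of_int n)
          * qpow \<tau> (- ((\<mu> + 2 * real_of_int (ww u v) * real_of_int n) ^ 2) / (4 * kk u v))) UNIV"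

definition Gamma :: "nat \<Rightarrow> nat \<Rightarrow> int \<Rightarrow> int \<Rightarrow> complex \<Rightarrow> complex" where
  "Gamma u v \<mu> r \<tau> =
     (if Im \<tau> > 0 then
        (\<Sum>s\<in>{1..int v - 1}. (-1)^(nat (s - 1)) * (chi u v r s \<tau> / eta \<tau>) *
            (theta' u v (real_of_int \<mu> + real_of_int s * kk u v) \<tau>
           - theta' u v (real_of_int \<mu> - real_of_int s * kk u v) \<tau>))
      else 0)"

definition cscale :: "complex \<Rightarrow> (complex \<Rightarrow> complex) \<Rightarrow> (complex \<Rightarrow> complex)" where
  "cscale c f = (\<lambda>x. c * f x)"

definition Vk :: "nat \<Rightarrow> nat \<Rightarrow> (complex \<Rightarrow> complex) set" where
  "Vk u v = module.span cscale
     {Gamma u v \<mu> r | \<mu> r. 1 \<le> r \<and> r \<le> int u - 1 \<and> \<mu> mod 2 = (r - 1) mod 2}"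

definition Bk :: "nat \<Rightarrow> nat \<Rightarrow> (int \<times> int) set" where
  "Bk u v = {(\<mu>, r). \<mu> mod 2 = (r - 1) mod 2 \<and>
     (if odd u then 0 \<le> \<mu> \<and> \<mu> \<le> ww u v \<and> 1 \<le> r \<and> 2 * r \<le> int u - 1
      else (0 \<le> \<mu> \<and> \<mu> \<le> ww u v \<and> 1 \<le> r \<and> 2 * r \<le> int u - 2)
         \<or> (0 \<le> \<mu> \<and> 2 * \<mu> \<le> ww u v \<and> 2 * r = int u))}"

end

theory Submission
  imports Defs
begin


lemma geo_int_summable:
  fixes z :: real assumes "0 \<le> z" "z < 1"
  shows "(\<lambda>m::int. z ^ nat \<bar>m\<bar>) summable_on UNIV"
proof -
  have g: "(\<lambda>n::nat. z ^ n) summable_on UNIV"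
    using assms by (subst summable_on_UNIV_nonneg_real_iff) (auto intro: summable_geometric)
  have 1: "(\<lambda>m::int. z ^ nat \<bar>m\<bar>) summable_on (int ` UNIV)"
    by (subst summable_on_reindex) (auto simp: o_def g)
  have 2: "(\<lambda>m::int. z ^ nat \<bar>m\<bar>) summable_on ((\<lambda>n. - int n) ` UNIV)"
    by (subst summable_on_reindex) (auto simp: o_def g inj_on_def)
  have "UNIV = int ` UNIV \<union> (\<lambda>n. - int n) ` UNIV"
  proof (intro set_eqI iffI)
    fix x :: int
    show "x \<in> int ` UNIV \<union> (\<lambda>n. - int n) ` UNIV"
    proof (cases "x \<ge> 0")
      case True
      then have "x = int (nat x)" by simp
      then show ?thesis by blast
    next
      case False
      then have "x = - int (nat (-x))" by simp
      then show ?thesis by blast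
    qed
  qed simp
  then show ?thesis using summable_on_union[OF 1 2] by simp
qed

lemma exp_sq_summable:
  fixes \<beta> :: real assumes "\<beta> > 0"
  shows "(\<lambda>m::int. exp (- \<beta> * (real_of_int m)^2)) summable_on UNIV"
proof (rule summable_on_comparison_test[OF geo_int_summable[of "exp (-\<beta>)"]])
  show "0 \<le> exp (-\<beta>)" by simp
  show "exp (-\<beta>) < 1" using assms by simp
  fix m :: int
  have "\<bar>m\<bar> \<le> m^2"
  proof (cases "m = 0")
    case False
    then have "1 \<le> \<bar>m\<bar>" by simp
    then have "\<bar>m\<bar> * 1 \<le> \<bar>m\<bar> * \<bar>m\<bar>" by (rule mult_left_mono) simp
    then show ?thesis by (simp add: power2_eq_square abs_mult_self_eq)
  qed simp
  then have "real_of_int \<bar>m\<bar> \<le> (real_of_int m)^2" by (metis of_int_le_iff of_int_power)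
  then have "- \<beta> * (real_of_int m)^2 \<le> real (nat \<bar>m\<bar>) * (-\<beta>)" using assms by simp
  then show "exp (- \<beta> * (real_of_int m)^2) \<le> exp (-\<beta>) ^ nat \<bar>m\<bar>"
    by (simp add: exp_of_nat_mult[symmetric])
qed simp

lemma norm_qpow: "norm (qpow \<tau> x) = exp (- 2 * pi * Im \<tau> * x)"
  by (simp add: qpow_def)

lemma qsum_summable:
  assumes "Im \<tau> > 0" "c > 0" "inj h"
  shows "(\<lambda>n::int. qpow \<tau> ((real_of_int (h n))^2 / c)) summable_on UNIV"
proof (rule abs_summable_summable)
  define \<beta> where "\<beta> = 2 * pi * Im \<tau> / c"
  have b: "\<beta> > 0" using assms by (simp add: \<beta>_def)
  have "(\<lambda>m::int. exp (- \<beta> * (real_of_int m)^2)) summable_on (h ` UNIV)"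
    by (rule summable_on_subset_banach[OF exp_sq_summable[OF b]]) auto
  then have "((\<lambda>m::int. exp (- \<beta> * (real_of_int m)^2)) \<circ> h) summable_on UNIV"
    using summable_on_reindex[OF assms(3)] by blast
  moreover have "(\<lambda>n. norm (qpow \<tau> ((real_of_int (h n))^2 / c))) = ((\<lambda>m::int. exp (- \<beta> * (real_of_int m)^2)) \<circ> h)"
    by (simp add: fun_eq_iff norm_qpow \<beta>_def)
  ultimately show "(\<lambda>n. norm (qpow \<tau> ((real_of_int (h n))^2 / c))) summable_on UNIV" by simp
qed

lemma theta'_F:
  "theta' u v y \<tau> = - (1 / (2 * of_int (ww u v))) * infsum (\<lambda>n::int. of_real (y + 2 * real_of_int (ww u v) * real_of_int n)
          * qpow \<tau> (- ((y + 2 * real_of_int (ww u v) * real_of_int n) ^ 2) / (4 * kk u v))) UNIV"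
  unfolding theta'_def by (rule refl)

lemma theta'_uminus: "theta' u v (-x) \<tau> = - theta' u v x \<tau>"
proof -
  define F where "F = (\<lambda>y n::int. of_real (y + 2 * real_of_int (ww u v) * real_of_int n)
          * qpow \<tau> (- ((y + 2 * real_of_int (ww u v) * real_of_int n) ^ 2) / (4 * kk u v)))"
  have th: "\<And>y. theta' u v y \<tau> = - (1 / (2 * of_int (ww u v))) * infsum (F y) UNIV"
    unfolding F_def by (rule theta'_F)
  have bij: "bij_betw uminus (UNIV::int set) UNIV" by (rule bij_betwI[of _ _ _ uminus]) auto
  have "infsum (F (-x)) UNIV = infsum (\<lambda>n. F (-x) (- n)) UNIV"
    by (rule infsum_reindex_bij_betw[OF bij, symmetric])
  also have "\<dots> = infsum (\<lambda>n. - F x n) UNIV"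
  proof (rule infsum_cong)
    fix n :: int
    have e: "-x + 2 * real_of_int (ww u v) * real_of_int (-n) = - (x + 2 * real_of_int (ww u v) * real_of_int n)"
      by simp
    show "F (-x) (- n) = - F x n" unfolding F_def e power2_minus of_real_minus mult_minus_left ..
  qed
  also have "\<dots> = - infsum (F x) UNIV" by (rule infsum_uminus)
  finally have c: "infsum (F (-x)) UNIV = - infsum (F x) UNIV" .
  show ?thesis unfolding th c by simp
qed

lemma theta'_period: "theta' u v (x + 2 * real_of_int (ww u v) * real_of_int j) \<tau> = theta' u v x \<tau>"
proof -
  define F where "F = (\<lambda>y n::int. of_real (y + 2 * real_of_int (ww u v) * real_of_int n)
          * qpow \<tau> (- ((y + 2 * real_of_int (ww u v) * real_of_int n) ^ 2) / (4 * kk u v)))"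
  have th: "\<And>y. theta' u v y \<tau> = - (1 / (2 * of_int (ww u v))) * infsum (F y) UNIV"
    unfolding F_def by (rule theta'_F)
  have bij: "bij_betw (\<lambda>n. n + j) (UNIV::int set) UNIV" by (rule bij_betwI[of _ _ _ "\<lambda>n. n - j"]) auto
  have "infsum (F x) UNIV = infsum (\<lambda>n. F x (n + j)) UNIV"
    by (rule infsum_reindex_bij_betw[OF bij, symmetric])
  also have "\<dots> = infsum (F (x + 2 * real_of_int (ww u v) * real_of_int j)) UNIV"
  proof (rule infsum_cong)
    fix n :: int
    have e: "x + 2 * real_of_int (ww u v) * real_of_int (n + j) = (x + 2 * real_of_int (ww u v) * real_of_int j) + 2 * real_of_int (ww u v) * real_of_int n"
      by (simp add: algebra_simps)
    show "F x (n + j) = F (x + 2 * real_of_int (ww u v) * real_of_int j) n" unfolding F_def e ..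
  qed
  finally have c: "infsum (F x) UNIV = infsum (F (x + 2 * real_of_int (ww u v) * real_of_int j)) UNIV" .
  show ?thesis unfolding th c ..
qed

lemma infsum_two_reindex:
  fixes f g :: "int \<Rightarrow> complex"
  assumes "f summable_on UNIV" "g summable_on UNIV" "bij p" "bij q"
  shows "infsum (\<lambda>n. f (p n) - g (q n)) UNIV = infsum (\<lambda>n. f n - g n) UNIV"
proof -
  have sp: "(\<lambda>n. f (p n)) summable_on UNIV"
    using summable_on_reindex[of p UNIV f] assms by (auto simp: bij_def o_def)
  have sq: "(\<lambda>n. g (q n)) summable_on UNIV"
    using summable_on_reindex[of q UNIV g] assms by (auto simp: bij_def o_def)
  have ip: "infsum (\<lambda>n. f (p n)) UNIV = infsum f UNIV"
    using infsum_reindex_bij_betw[of p UNIV UNIV f] assms by (simp add: bij_def)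
  have iq: "infsum (\<lambda>n. g (q n)) UNIV = infsum g UNIV"
    using infsum_reindex_bij_betw[of q UNIV UNIV g] assms by (simp add: bij_def)
  have "infsum (\<lambda>n. f (p n) - g (q n)) UNIV = infsum (\<lambda>n. f (p n) + - g (q n)) UNIV" by simp
  also have "\<dots> = infsum (\<lambda>n. f (p n)) UNIV + infsum (\<lambda>n. - g (q n)) UNIV"
    by (rule infsum_add[OF sp]) (simp add: summable_on_uminus sq)
  also have "\<dots> = infsum f UNIV - infsum g UNIV" by (simp add: infsum_uminus ip iq)
  also have "\<dots> = infsum f UNIV + infsum (\<lambda>n. - g n) UNIV" by (simp add: infsum_uminus)
  also have "\<dots> = infsum (\<lambda>n. f n + - g n) UNIV"
    by (rule infsum_add[symmetric]) (use assms in \<open>auto simp: summable_on_uminus\<close>)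
  finally show ?thesis by simp
qed

lemma inj_aff1: "(a::int) \<noteq> 0 \<Longrightarrow> inj (\<lambda>n. a * n + b - c)"
  by (rule inj_onI) simp
lemma inj_aff2: "(a::int) \<noteq> 0 \<Longrightarrow> inj (\<lambda>n. a * n + b + c)"
  by (rule inj_onI) simp

lemma chi_flip:
  assumes "u > 0" "v > 0" "Im \<tau> > 0"
  shows "chi u v (int u - r) (int v - s) \<tau> = chi u v r s \<tau>"
proof -
  define f where "f = (\<lambda>n::int. qpow \<tau> ((real_of_int (2 *  int u  *  int v  *  n + int v  *  r - int u  *  s))^2 / (4 * real u * real v)))"
  define g where "g = (\<lambda>n::int. qpow \<tau> ((real_of_int (2 *  int u  *  int v  *  n + int v  *  r + int u  *  s))^2 / (4 * real u * real v)))"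
  have c: "4 * real u * real v > 0" using assms by simp
  have a0: "2 * int u * int v \<noteq> 0" using assms by simp
  have fs: "f summable_on UNIV" unfolding f_def
    by (rule qsum_summable[OF assms(3) c inj_aff1[OF a0]])
  have gs: "g summable_on UNIV" unfolding g_def
    by (rule qsum_summable[OF assms(3) c inj_aff2[OF a0]])
  have bp: "bij (\<lambda>n::int. - n)" by (rule bij_betwI[of _ _ _ uminus]) auto
  have bq: "bij (\<lambda>n::int. - n - 1)" by (rule bij_betwI[of _ _ _ "\<lambda>n. - n - 1"]) auto
  have e1: "\<And>n. 2 * int u * int v * n + int v * (int u - r) - int u * (int v - s) = -(2 * int u * int v * (-n) + int v * r - int u * s)"
    by (simp add: algebra_simps)
  have e2: "\<And>n. 2 * int u * int v * n + int v * (int u - r) + int u * (int v - s) = -(2 * int u * int v * (-n - 1) + int v * r + int u * s)"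
    by (simp add: algebra_simps)
  have "infsum (\<lambda>n::int.
        qpow \<tau> ((real_of_int (2 *  int u  *  int v  *  n + int v  *  (int u - r) - int u  *  (int v - s)))^2 / (4 * real u * real v))
      - qpow \<tau> ((real_of_int (2 *  int u  *  int v  *  n + int v  *  (int u - r) + int u  *  (int v - s)))^2 / (4 * real u * real v))) UNIV
     = infsum (\<lambda>n. f (- n) - g (- n - 1)) UNIV"
    unfolding e1 e2 f_def g_def by (simp only: of_int_minus power2_minus)
  also have "\<dots> = infsum (\<lambda>n. f n - g n) UNIV"
    by (rule infsum_two_reindex[OF fs gs bp bq])
  finally have X: "infsum (\<lambda>n::int.
        qpow \<tau> ((real_of_int (2 * int u * int v * n + int v * (int u - r) - int u * (int v - s)))^2 / (4 * real u * real v))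
      - qpow \<tau> ((real_of_int (2 * int u * int v * n + int v * (int u - r) + int u * (int v - s)))^2 / (4 * real u * real v))) UNIV
     = infsum (\<lambda>n. f n - g n) UNIV" .
  show ?thesis unfolding chi_def X f_def g_def by (rule refl)
qed



lemma Gamma_period: "Gamma u v (\<mu> + 2 * ww u v * j) r \<tau> = Gamma u v \<mu> r \<tau>"
proof -
  have a1: "\<And>s. real_of_int (\<mu> + 2 * ww u v * j) + real_of_int s * kk u v
      = (real_of_int \<mu> + real_of_int s * kk u v) + 2 * real_of_int (ww u v) * real_of_int j"
    by simp
  have a2: "\<And>s. real_of_int (\<mu> + 2 * ww u v * j) - real_of_int s * kk u v
      = (real_of_int \<mu> - real_of_int s * kk u v) + 2 * real_of_int (ww u v) * real_of_int j"
    by simp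
  show ?thesis unfolding Gamma_def a1 a2 theta'_period ..
qed

lemma Gamma_neg: "Gamma u v (- \<mu>) r \<tau> = Gamma u v \<mu> r \<tau>"
proof -
  have a1: "\<And>s. real_of_int (- \<mu>) + real_of_int s * kk u v = - (real_of_int \<mu> - real_of_int s * kk u v)"
    by simp
  have a2: "\<And>s. real_of_int (- \<mu>) - real_of_int s * kk u v = - (real_of_int \<mu> + real_of_int s * kk u v)"
    by simp
  have a3: "\<And>a b::complex. - a - - b = b - a" by simp
  show ?thesis unfolding Gamma_def a1 a2 theta'_uminus a3 ..
qed

lemma kk_flip: "v > 0 \<Longrightarrow> real_of_int (int v - s) * kk u v = - real_of_int (ww u v) - real_of_int s * kk u v"
  by (simp add: kk_def ww_def field_simps)

lemma sign_flip:
  assumes "1 \<le> s" "s \<le> int v - 1"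
  shows "(-1::complex) ^ nat (int v - s - 1) = (-1) ^ v * (-1) ^ nat (s - 1)"
proof -
  define a where "a = nat (s - 1)"
  define b where "b = nat (int v - s - 1)"
  have hv: "v = a + b + 2" using assms by (simp add: a_def b_def)
  have "(-1::complex) ^ v * (-1) ^ a = (-1) ^ (2 * a) * (-1) ^ b"
    by (simp add: hv power_add mult_2)
  also have "(-1::complex) ^ (2 * a) = 1" by simp
  finally show ?thesis by (simp add: a_def b_def)
qed

lemma Gamma_flip:
  assumes "u > 0" "v > 0"
  shows "Gamma u v \<mu> (int u - r) \<tau> = - ((-1) ^ v) * Gamma u v (ww u v - \<mu>) r \<tau>"
proof (cases "Im \<tau> > 0")
  case False
  then show ?thesis by (simp add: Gamma_def)
next
  case True
  define S where "S = {1..int v - 1}"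
  define F where "F = (\<lambda>s. (-1)^(nat (s - 1)) * (chi u v (int u - r) s \<tau> / eta \<tau>) *
            (theta' u v (real_of_int \<mu> + real_of_int s * kk u v) \<tau>
           - theta' u v (real_of_int \<mu> - real_of_int s * kk u v) \<tau>))"
  define G where "G = (\<lambda>s. (-1)^(nat (s - 1)) * (chi u v r s \<tau> / eta \<tau>) *
            (theta' u v (real_of_int (ww u v - \<mu>) + real_of_int s * kk u v) \<tau>
           - theta' u v (real_of_int (ww u v - \<mu>) - real_of_int s * kk u v) \<tau>))"
  have L: "Gamma u v \<mu> (int u - r) \<tau> = sum F S" using True unfolding Gamma_def F_def S_def by simp
  have R: "Gamma u v (ww u v - \<mu>) r \<tau> = sum G S" using True unfolding Gamma_def G_def S_def by simp
  have "sum F S = sum (\<lambda>s. F (int v - s)) S"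
    by (rule sum.reindex_bij_witness[of _ "\<lambda>s. int v - s" "\<lambda>s. int v - s"]) (auto simp: S_def)
  also have "\<dots> = sum (\<lambda>s. - ((-1) ^ v) * G s) S"
  proof (rule sum.cong[OF refl])
    fix s assume s: "s \<in> S"
    have t1: "theta' u v (real_of_int \<mu> + real_of_int (int v - s) * kk u v) \<tau>
        = - theta' u v (real_of_int (ww u v - \<mu>) + real_of_int s * kk u v) \<tau>"
    proof -
      have "real_of_int \<mu> + real_of_int (int v - s) * kk u v = - (real_of_int (ww u v - \<mu>) + real_of_int s * kk u v)"
        using kk_flip[OF assms(2), of s u] by simp
      then show ?thesis by (simp only: theta'_uminus)
    qed
    have t2: "theta' u v (real_of_int \<mu> - real_of_int (int v - s) * kk u v) \<tau>
        = - theta' u v (real_of_int (ww u v - \<mu>) - real_of_int s * kk u v) \<tau>"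
    proof -
      have "real_of_int \<mu> - real_of_int (int v - s) * kk u v =
          (- (real_of_int (ww u v - \<mu>) - real_of_int s * kk u v)) + 2 * real_of_int (ww u v) * real_of_int (1::int)"
        using kk_flip[OF assms(2), of s u] by simp
      then have "theta' u v (real_of_int \<mu> - real_of_int (int v - s) * kk u v) \<tau>
          = theta' u v (- (real_of_int (ww u v - \<mu>) - real_of_int s * kk u v)) \<tau>"
        by (simp only: theta'_period)
      then show ?thesis by (simp only: theta'_uminus)
    qed
    have c: "chi u v (int u - r) (int v - s) \<tau> = chi u v r s \<tau>"
      by (rule chi_flip[OF assms True])
    have sg: "(-1::complex) ^ nat (int v - s - 1) = (-1) ^ v * (-1) ^ nat (s - 1)"
      using s by (intro sign_flip) (auto simp: S_def)
    show "F (int v - s) = - ((-1) ^ v) * G s"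
      unfolding F_def G_def t1 t2 c sg by (simp add: algebra_simps)
  qed
  also have "\<dots> = - ((-1) ^ v) * sum G S" by (simp add: sum_distrib_left)
  finally show ?thesis using L R by simp
qed



lemma VS: "vector_space cscale"
  by unfold_locales (auto simp: cscale_def fun_eq_iff algebra_simps)

interpretation V: vector_space cscale by (rule VS)

lemma Gamma_norm:
  assumes "ww u v > 0"
  shows "\<exists>m. 0 \<le> m \<and> m \<le> ww u v \<and> m mod 2 = \<mu> mod 2 \<and> Gamma u v \<mu> r = Gamma u v m r"
proof -
  define w where "w = ww u v"
  define m0 where "m0 = \<mu> mod (2 * w)"
  have w0: "w > 0" using assms by (simp add: w_def)
  have m0r: "0 \<le> m0" "m0 < 2 * w" using w0 by (simp_all add: m0_def)
  have eq: "\<mu> = m0 + 2 * ww u v * (\<mu> div (2 * w))" unfolding m0_def w_def by simp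
  have g0: "Gamma u v \<mu> r = Gamma u v m0 r"
    by (rule ext, subst eq, rule Gamma_period)
  have p0: "m0 mod 2 = \<mu> mod 2" unfolding m0_def by (simp add: mod_mod_cancel)
  show ?thesis
  proof (cases "m0 \<le> w")
    case True
    then show ?thesis using g0 p0 m0r by (auto simp: w_def)
  next
    case False
    have "Gamma u v (- m0 + 2 * ww u v * 1) r = Gamma u v m0 r"
      by (rule ext) (simp only: Gamma_period Gamma_neg)
    moreover have "- m0 + 2 * ww u v * 1 = 2 * w - m0" by (simp add: w_def)
    moreover have "(2 * w - m0) mod 2 = \<mu> mod 2" using p0 by presburger
    ultimately show ?thesis using g0 False m0r
      by (intro exI[of _ "2 * w - m0"]) (auto simp: w_def)
  qed
qed

lemma Gamma_flip_fun:
  assumes "u > 0" "v > 0"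
  shows "Gamma u v \<mu> (int u - r) = cscale (- ((-1) ^ v)) (Gamma u v (ww u v - \<mu>) r)"
  using Gamma_flip[OF assms] by (simp add: cscale_def fun_eq_iff)

lemma Gamma_repr:
  assumes "u \<ge> 2" "v \<ge> 2" "u < 2 * v"
    and r: "1 \<le> r" "r \<le> int u - 1" "\<mu> mod 2 = (r - 1) mod 2"
  shows "\<exists>c m r'. (m, r') \<in> Bk u v \<and> Gamma u v \<mu> r = cscale c (Gamma u v m r')"
proof -
  have w0: "ww u v > 0" using assms by (simp add: ww_def)
  obtain m where m: "0 \<le> m" "m \<le> ww u v" "m mod 2 = \<mu> mod 2" and gm: "Gamma u v \<mu> r = Gamma u v m r"
    using Gamma_norm[OF w0] by blast
  have one: "cscale 1 f = f" for f by (simp add: cscale_def)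
  have pos: "u > 0" "v > 0" using assms by auto
  show ?thesis
  proof (cases "2 * r \<le> int u - 1 \<and> (odd u \<or> 2 * r \<le> int u - 2)")
    case True
    then have "(m, r) \<in> Bk u v" using m r unfolding Bk_def by auto
    then show ?thesis using gm one by metis
  next
    case False
    define r' where "r' = int u - r"
    have rr: "r = int u - r'" by (simp add: r'_def)
    have fl: "Gamma u v m r = cscale (- ((-1) ^ v)) (Gamma u v (ww u v - m) r')"
      unfolding rr by (rule Gamma_flip_fun[OF pos])
    have par: "(ww u v - m) mod 2 = (r' - 1) mod 2"
      using m r unfolding r'_def ww_def by presburger
    show ?thesis
    proof (cases "2 * r = int u")
      case False2: False
      with False have "2 * r' \<le> int u - 1 \<and> (odd u \<or> 2 * r' \<le> int u - 2)" "1 \<le> r'"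
        using r unfolding r'_def by presburger+
      then have "(ww u v - m, r') \<in> Bk u v" using m par unfolding Bk_def by auto
      then show ?thesis using gm fl by metis
    next
      case True
      then have ev: "even u" by presburger
      have rr': "r' = r" using True by (simp add: r'_def)
      show ?thesis
      proof (cases "2 * m \<le> ww u v")
        case True
        then have "(m, r) \<in> Bk u v" using m r ev \<open>2 * r = int u\<close> unfolding Bk_def by auto
        then show ?thesis using gm one by metis
      next
        case False
        then have "(ww u v - m, r) \<in> Bk u v" using m r ev par rr' \<open>2 * r = int u\<close> unfolding Bk_def by auto
        then show ?thesis using gm fl rr' by metis
      qed
    qed
  qed
qed



lemma card_par:
  assumes "p = 0 \<or> p = 1"
  shows "card {\<mu>::int. 0 \<le> \<mu> \<and> \<mu> \<le> N \<and> \<mu> mod 2 = p} = nat ((N - p) div 2 + 1)"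
proof -
  have "{\<mu>::int. 0 \<le> \<mu> \<and> \<mu> \<le> N \<and> \<mu> mod 2 = p} = (\<lambda>i. 2 * i + p) ` {0..(N - p) div 2}"
  proof (intro set_eqI iffI)
    fix x assume "x \<in> {\<mu>::int. 0 \<le> \<mu> \<and> \<mu> \<le> N \<and> \<mu> mod 2 = p}"
    then have "x = 2 * (x div 2) + p" "x div 2 \<in> {0..(N - p) div 2}" using assms by (auto; presburger)+
    then show "x \<in> (\<lambda>i. 2 * i + p) ` {0..(N - p) div 2}" by blast
  next
    fix x assume "x \<in> (\<lambda>i. 2 * i + p) ` {0..(N - p) div 2}"
    then obtain i where "x = 2 * i + p" "0 \<le> i" "i \<le> (N - p) div 2" by auto
    then show "x \<in> {\<mu>::int. 0 \<le> \<mu> \<and> \<mu> \<le> N \<and> \<mu> mod 2 = p}" using assms by (auto; presburger)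
  qed
  moreover have "inj_on (\<lambda>i::int. 2 * i + p) A" for A by (rule inj_onI) simp
  ultimately show ?thesis by (simp add: card_image)
qed

lemma card_swap:
  assumes "finite R" "\<And>r. r \<in> R \<Longrightarrow> finite (M r)"
  shows "card {(\<mu>, r). r \<in> R \<and> \<mu> \<in> M r} = (\<Sum>r\<in>R. card (M r))"
proof -
  have "{(\<mu>, r). r \<in> R \<and> \<mu> \<in> M r} = prod.swap ` Sigma R M" by auto
  then have "card {(\<mu>, r). r \<in> R \<and> \<mu> \<in> M r} = card (Sigma R M)"
    by (simp add: card_image)
  also have "\<dots> = (\<Sum>r\<in>R. card (M r))" using assms by (simp add: card_SigmaI)
  finally show ?thesis .
qed

lemma sum_alt:
  assumes "0 \<le> K" "even w" "0 \<le> (w::int)"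
  shows "int (\<Sum>r\<in>{1..K}. nat ((w - (r - 1) mod 2) div 2 + 1)) = K * (w div 2) + (K + 1) div 2"
  using assms(1)
proof (induct K rule: int_ge_induct)
  case base
  then show ?case by simp
next
  case (step K)
  have s: "{1..K+1} = insert (K+1) {1..K}" using step(1) by auto
  have "int (\<Sum>r\<in>{1..K+1}. nat ((w - (r - 1) mod 2) div 2 + 1))
      = (w - K mod 2) div 2 + 1 + (K * (w div 2) + (K + 1) div 2)"
  proof -
    have n: "K + 1 \<notin> {1..K}" by simp
    have "(\<Sum>r\<in>{1..K+1}. nat ((w - (r - 1) mod 2) div 2 + 1)) = nat ((w - K mod 2) div 2 + 1) + (\<Sum>r\<in>{1..K}. nat ((w - (r - 1) mod 2) div 2 + 1))"
      unfolding s by (subst sum.insert[OF _ n]) auto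
    moreover have "int (nat ((w - K mod 2) div 2 + 1)) = (w - K mod 2) div 2 + 1" using assms by simp
    ultimately show ?thesis using step(2) by simp
  qed
  also have "\<dots> = (K + 1) * (w div 2) + (K + 1 + 1) div 2"
  proof -
    have "(K+1)*(w div 2) = K*(w div 2) + w div 2" by (simp add: algebra_simps)
    moreover have "(w - K mod 2) div 2 + 1 + (K+1) div 2 = w div 2 + (K+2) div 2" using assms by presburger
    ultimately show ?thesis by simp
  qed
  finally show ?case .
qed

lemma ar1: "odd (v::int) \<Longrightarrow> 2 * ((v - m - (m - 1) mod 2) div 2 + 1) + 2 * (m div 2) - 2 * (v - m) = - (v - 1 - 2 * m)"
  by presburger
lemma ar2: "odd (w::int) \<Longrightarrow> (w - (r - 1) mod 2) div 2 + 1 = (w + 1) div 2"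
  by presburger
lemma ar3: "odd (x::int) \<Longrightarrow> x = 2 * ((x - 1) div 2) + 1" by presburger
lemma ar4: "(r - 1) mod 2 = 0 \<or> (r - 1) mod 2 = (1::int)" by presburger

lemma card_Bk_odd:
  assumes "u \<ge> 2" "v \<ge> 2" "u < 2 * v" "odd u"
  shows "finite (Bk u v) \<and> real (card (Bk u v)) = (real u - 1) * (real_of_int (ww u v) + 1) / 4"
proof -
  define w where "w = ww u v"
  define M where "M = (\<lambda>r::int. {\<mu>::int. 0 \<le> \<mu> \<and> \<mu> \<le> w \<and> \<mu> mod 2 = (r - 1) mod 2})"
  define R where "R = {1..(int u - 1) div 2}"
  have B: "Bk u v = {(\<mu>, r). r \<in> R \<and> \<mu> \<in> M r}"
  proof -
    have h: "\<And>r x::int. (2*r \<le> x) = (r \<le> x div 2)" by presburger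
    show ?thesis unfolding Bk_def M_def R_def w_def using assms(4) by (auto simp: h)
  qed
  have fM: "finite (M r)" for r unfolding M_def by (rule finite_subset[of _ "{0..w}"]) auto
  have wodd: "odd w" using assms(4) by (simp add: w_def ww_def)
  have cM: "card (M r) = nat ((w + 1) div 2)" for r
  proof -
    have "card (M r) = nat ((w - (r - 1) mod 2) div 2 + 1)" unfolding M_def
      by (rule card_par[OF ar4])
    also have "(w - (r - 1) mod 2) div 2 + 1 = (w + 1) div 2" using wodd by (rule ar2)
    finally show ?thesis .
  qed
  have c1: "card (Bk u v) = card R * nat ((w + 1) div 2)"
    unfolding B by (subst card_swap) (auto simp: R_def fM cM)
  define a where "a = (int u - 1) div 2"
  define b where "b = (w - 1) div 2"
  have a: "int u = 2 * a + 1" unfolding a_def by (rule ar3) (use assms(4) in simp)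
  have b: "w = 2 * b + 1" unfolding b_def by (rule ar3[OF wodd])
  have w0: "w > 0" using assms by (simp add: w_def ww_def)
  have cR: "card R = nat a" by (simp add: R_def a_def)
  have "int (card (Bk u v)) = a * (b + 1)"
  proof -
    have "(w + 1) div 2 = b + 1" using b by simp
    moreover have "a \<ge> 0" "b \<ge> 0" using a b w0 by auto
    ultimately show ?thesis using c1 cR by (simp add: nat_mult_distrib)
  qed
  then have "real_of_int (int (card (Bk u v))) = real_of_int a * (real_of_int b + 1)" by simp
  then have r1: "real (card (Bk u v)) = real_of_int a * (real_of_int b + 1)" by simp
  have r2: "real u = 2 * real_of_int a + 1"
  proof -
    have "real_of_int (int u) = real_of_int (2 * a + 1)" using a by simp
    then show ?thesis by simp
  qed
  have r3: "real_of_int (ww u v) = 2 * real_of_int b + 1" using b unfolding w_def by simp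
  have "real (card (Bk u v)) = (real u - 1) * (real_of_int (ww u v) + 1) / 4"
    unfolding r1 r2 r3 by (simp add: field_simps)
  moreover have "finite (Bk u v)" unfolding B
    by (rule finite_subset[of _ "{0..w} \<times> R"]) (auto simp: M_def R_def)
  ultimately show ?thesis by simp
qed

lemma card_Bk_even:
  assumes "u \<ge> 2" "v \<ge> 2" "coprime u v" "u < 2 * v" "even u"
  shows "finite (Bk u v) \<and> real (card (Bk u v)) = real u * real_of_int (ww u v) / 4 - (real v - 1 - real u) / 2"
proof -
  define w where "w = ww u v"
  define m where "m = int u div 2"
  have um: "int u = 2 * m" using assms(5) unfolding m_def by presburger
  have vodd: "odd (int v)"
  proof
    assume "even (int v)"
    then have "(2::nat) dvd u" "2 dvd v" using assms(5) by auto
    then show False using assms(3) coprime_common_divisor[of u v 2] by simp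
  qed
  have wm: "w = 2 * (int v - m)" using um by (simp add: w_def ww_def)
  have m1: "m \<ge> 1" using um assms by simp
  have mv: "m < int v" using um assms by simp
  define M where "M = (\<lambda>r::int. {\<mu>::int. 0 \<le> \<mu> \<and> \<mu> \<le> (if r = m then w div 2 else w) \<and> \<mu> mod 2 = (r - 1) mod 2})"
  have B: "Bk u v = {(\<mu>, r). r \<in> {1..m} \<and> \<mu> \<in> M r}"
  proof -
    have h1: "\<And>r. (2*r \<le> 2*m - 2) = (r \<le> m - 1)" by presburger
    have h3: "\<And>x. (2*x \<le> w) = (x \<le> w div 2)" by presburger
    have h4: "w div 2 \<le> w" using wm mv by simp
    have e: "int u - 2 = 2*m - 2" using um by simp
    show ?thesis unfolding Bk_def M_def using assms(5) h4 m1 by (auto simp: e um h1 h3 w_def[symmetric])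
  qed
  have fM: "finite (M r)" for r unfolding M_def by (rule finite_subset[of _ "{0..w}"]) auto
  have cM: "card (M r) = nat (((if r = m then w div 2 else w) - (r - 1) mod 2) div 2 + 1)" for r
    unfolding M_def by (rule card_par[OF ar4])
  have "card (Bk u v) = (\<Sum>r\<in>{1..m}. card (M r))"
    unfolding B by (subst card_swap) (auto simp: fM)
  also have "{1..m} = insert m {1..m-1}" using m1 by auto
  also have "(\<Sum>r\<in>insert m {1..m-1}. card (M r)) = card (M m) + (\<Sum>r\<in>{1..m-1}. card (M r))"
    by simp
  also have "(\<Sum>r\<in>{1..m-1}. card (M r)) = (\<Sum>r\<in>{1..m-1}. nat ((w - (r - 1) mod 2) div 2 + 1))"
    by (rule sum.cong) (auto simp: cM)
  finally have c1: "int (card (Bk u v)) = int (card (M m)) + int (\<Sum>r\<in>{1..m-1}. nat ((w - (r - 1) mod 2) div 2 + 1))"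
    by simp
  have ew: "even w" using wm by simp
  have w0: "0 \<le> w" using wm mv by simp
  have c2: "int (\<Sum>r\<in>{1..m-1}. nat ((w - (r - 1) mod 2) div 2 + 1)) = (m-1) * (int v - m) + m div 2"
    using sum_alt[of "m-1" w, OF _ ew w0] m1 wm by simp
  have c3: "int (card (M m)) = ((int v - m) - (m - 1) mod 2) div 2 + 1"
  proof -
    have "int (card (M m)) = int (nat ((w div 2 - (m - 1) mod 2) div 2 + 1))" using cM[of m] by simp
    also have "w div 2 = int v - m" using wm by simp
    finally show ?thesis using mv by simp
  qed
  define X where "X = int (card (Bk u v))"
  have C: "X = ((int v - m) - (m - 1) mod 2) div 2 + 1 + ((m-1) * (int v - m) + m div 2)"
    unfolding X_def using c1 c2 c3 by simp
  have "2 * X = 2 * m * (int v - m) - (int v - 1 - 2 * m)"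
  proof -
    have "2 * ((m-1) * (int v - m)) = 2 * m * (int v - m) - 2 * (int v - m)" by (simp add: algebra_simps)
    moreover have "2 * ((int v - m - (m - 1) mod 2) div 2 + 1) + 2 * (m div 2) - 2 * (int v - m) = - (int v - 1 - 2 * m)"
      by (rule ar1[OF vodd])
    ultimately show ?thesis unfolding C by (simp add: algebra_simps)
  qed
  then have "real_of_int (2 * X) = real_of_int (2 * m * (int v - m) - (int v - 1 - 2 * m))" by simp
  then have r1: "2 * real (card (Bk u v)) = 2 * real_of_int m * (real v - real_of_int m) - (real v - 1 - 2 * real_of_int m)"
    unfolding X_def by simp
  have r2: "real u = 2 * real_of_int m"
  proof -
    have "real_of_int (int u) = real_of_int (2 * m)" using um by simp
    then show ?thesis by simp
  qed
  have r3: "real_of_int (ww u v) = 2 * (real v - real_of_int m)" using wm unfolding w_def by simp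
  have "real (card (Bk u v)) = real u * real_of_int (ww u v) / 4 - (real v - 1 - real u) / 2"
    using r1 unfolding r2 r3 by (simp add: field_simps)
  moreover have "finite (Bk u v)" unfolding B
    by (rule finite_subset[of _ "{0..w} \<times> {1..m}"]) (auto simp: M_def split: if_splits)
  ultimately show ?thesis by simp
qed


theorem mainTheorem12:
  fixes u v :: nat
  assumes "u \<ge> 2" and "v \<ge> 2" and "coprime u v" and "u < 2 * v"
  shows "(\<exists>S. finite S \<and> Vk u v \<subseteq> module.span cscale S)
       \<and> vector_space.dim cscale (Vk u v) \<le> card (Bk u v)
       \<and> real (card (Bk u v)) =
           (if odd u then (real u - 1) * (real_of_int (ww u v) + 1) / 4
            else real u * real_of_int (ww u v) / 4 - (real v - 1 - real u) / 2)"
proof -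
  have cb: "finite (Bk u v) \<and> real (card (Bk u v)) =
           (if odd u then (real u - 1) * (real_of_int (ww u v) + 1) / 4
            else real u * real_of_int (ww u v) / 4 - (real v - 1 - real u) / 2)"
    using card_Bk_odd[OF assms(1,2,4)] card_Bk_even[OF assms] by (cases "odd u") auto
  then have fin: "finite (Bk u v)" by simp
  define g where "g = (\<lambda>p. Gamma u v (fst p) (snd p))"
  define T where "T = g ` Bk u v"
  have fT: "finite T" unfolding T_def using fin by simp
  have S0: "{Gamma u v \<mu> r | \<mu> r. 1 \<le> r \<and> r \<le> int u - 1 \<and> \<mu> mod 2 = (r - 1) mod 2} \<subseteq> V.span T"
  proof
    fix f assume "f \<in> {Gamma u v \<mu> r | \<mu> r. 1 \<le> r \<and> r \<le> int u - 1 \<and> \<mu> mod 2 = (r - 1) mod 2}"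
    then obtain \<mu> r where f: "f = Gamma u v \<mu> r" and r: "1 \<le> r" "r \<le> int u - 1" "\<mu> mod 2 = (r - 1) mod 2"
      by blast
    obtain c m r' where mr: "(m, r') \<in> Bk u v" and e: "Gamma u v \<mu> r = cscale c (Gamma u v m r')"
      using Gamma_repr[OF assms(1,2,4) r] by blast
    have "Gamma u v m r' \<in> T" unfolding T_def g_def using mr by force
    then have "cscale c (Gamma u v m r') \<in> V.span T" by (intro V.span_scale V.span_base)
    then show "f \<in> V.span T" using f e by simp
  qed
  have sub: "Vk u v \<subseteq> V.span T"
  proof -
    have "Vk u v \<subseteq> V.span (V.span T)" unfolding Vk_def by (rule V.span_mono[OF S0])
    then show ?thesis by (simp add: V.span_span)
  qed
  have "V.dim (Vk u v) \<le> card T" by (rule V.dim_le_card[OF sub fT])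
  also have "card T \<le> card (Bk u v)" unfolding T_def by (rule card_image_le[OF fin])
  finally have "V.dim (Vk u v) \<le> card (Bk u v)" .
  then show ?thesis using cb sub fT by blast
qed

end
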